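(* Let $n,k$ be positive integers with $n \geq 3(n-k)$ and $n\geq k$, and let $C\in\mathcal{K}_{k+1}(n+1)$. Let $M=\{k+2,k+3,\dots,2n-k+1\}$, and let $S_C$ be the set of chords of $C$ having neither their start point nor their end point in $M$. Let $a$ be the chord of $C$ whose end point is $2n-k+2$. Let $m$ be the number of chords $b\in S_C$ with $s_b<s_a$. Then $m<n-k+1$.
   Context: A linear chord diagram of size $n$ is a partition of $\{1,2,\dots,2n\}$ into blocks of size two, called chords. For a chord $c=\{s_c,e_c\}$ with $s_c<e_c$, $s_c$ is its start point, $e_c$ its end point, and its length is $e_c-s_c$. $\mathcal{K}_k(n)$ is the set of all linear chord diagrams of size $n$ in which every chord has length at least $k$. (Under the hypotheses, $2n-k+2$ is an end point of some chord of $C$.) *)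

theory Defs
  imports "HOL-Library.Disjoint_Sets"
begin

definition chord_diagram :: "nat \<Rightarrow> nat set set \<Rightarrow> bool" where
  "chord_diagram n C \<longleftrightarrow> partition_on {1..2*n} C \<and> (\<forall>c\<in>C. card c = 2)"

definition start_pt :: "nat set \<Rightarrow> nat" where "start_pt c = Min c"
definition end_pt :: "nat set \<Rightarrow> nat" where "end_pt c = Max c"
definition chord_length :: "nat set \<Rightarrow> nat" where "chord_length c = end_pt c - start_pt c"

definition K :: "nat \<Rightarrow> nat \<Rightarrow> nat set set set" where
  "K k n = {C. chord_diagram n C \<and> (\<forall>c\<in>C. chord_length c \<ge> k)}"

end

theory Submission
  imports Defs
begin

lemma two_elems:
  assumes "card (c::nat set) = 2"
  shows "c = {Min c, Max c} \<and> Min c < Max c"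
proof -
  obtain x y where "c = {x,y}" "x \<noteq> y" using assms by (auto simp: card_2_iff)
  then show ?thesis by (cases "x < y") (auto simp: insert_commute)
qed

lemma sum_ind2:
  assumes "finite D"
  shows "(\<Sum>c\<in>D. if P c then (2::nat) else 0) = 2 * card {c\<in>D. P c}"
  using assms by (simp add: sum.If_cases Int_def)

theorem lemma3:
  fixes n k :: nat and C :: "nat set set" and a :: "nat set"
  assumes "0 < n" "0 < k" "n \<ge> 3 * (n - k)" "n \<ge> k"
    and "C \<in> K (k + 1) (n + 1)"
    and "a \<in> C" "end_pt a = 2 * n - k + 2"
  shows "card {b \<in> {c \<in> C. start_pt c \<notin> {k + 2 .. 2 * n - k + 1} \<and> end_pt c \<notin> {k + 2 .. 2 * n - k + 1}}.
                 start_pt b < start_pt a} < n - k + 1"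
proof -
  have part: "partition_on {1..2*(n+1)} C" and c2: "\<And>c. c \<in> C \<Longrightarrow> card c = 2"
    and len: "\<And>c. c \<in> C \<Longrightarrow> chord_length c \<ge> k + 1"
    using assms(5) by (auto simp: K_def chord_diagram_def)
  have UC: "\<Union>C = {1..2*(n+1)}" and dis: "\<And>c c'. c \<in> C \<Longrightarrow> c' \<in> C \<Longrightarrow> c \<noteq> c' \<Longrightarrow> c \<inter> c' = {}"
    using part by (auto simp: partition_on_def disjoint_def)
  have fin: "finite C" using UC by (metis finite_UnionD finite_atLeastAtMost)
  have ch: "\<And>c. c \<in> C \<Longrightarrow> c = {start_pt c, end_pt c} \<and> start_pt c + k + 1 \<le> end_pt c
       \<and> 1 \<le> start_pt c \<and> end_pt c \<le> 2*n+2"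
  proof -
    fix c assume c: "c \<in> C"
    have "c = {Min c, Max c} \<and> Min c < Max c" using two_elems c2[OF c] .
    moreover have "c \<subseteq> {1..2*(n+1)}" using UC c by auto
    ultimately show "c = {start_pt c, end_pt c} \<and> start_pt c + k + 1 \<le> end_pt c
       \<and> 1 \<le> start_pt c \<and> end_pt c \<le> 2*n+2"
      using len[OF c] unfolding start_pt_def end_pt_def chord_length_def by auto
  qed
  define s where "s = start_pt a"
  define e where "e = end_pt a"
  define d where "d = n - k"
  have e: "e = k + 2 + 2*d" using assms(7) assms(4) unfolding e_def d_def by simp
  have kd: "2*d \<le> k" using assms(3,4) unfolding d_def by simp
  have as: "a = {s, e}" "s + k + 1 \<le> e" "1 \<le> s" using ch[OF assms(6)] s_def e_def by auto
  have s2d: "s \<le> 2*d + 1" using as e by simp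
  define Y where "Y = {1..<s} \<union> {e<..2*n+2}"
  define W where "W = {s<..<e}"
  define D where "D = C - {a}"
  have finD: "finite D" using fin D_def by simp
  have YW: "Y \<inter> W = {}" using Y_def W_def by auto
  have cD: "\<And>c. c \<in> D \<Longrightarrow> c \<subseteq> Y \<union> W"
  proof -
    fix c assume c: "c \<in> D"
    have "c \<inter> a = {}" using dis c assms(6) D_def by auto
    moreover have "c \<subseteq> {1..2*n+2}" using UC c D_def by auto
    ultimately show "c \<subseteq> Y \<union> W"
    proof (intro subsetI)
      fix x assume "c \<inter> a = {}" "c \<subseteq> {1..2*n+2}" "x \<in> c"
      then have x: "1 \<le> x" "x \<le> 2*n+2" "x \<noteq> s" "x \<noteq> e" using as by auto
      show "x \<in> Y \<union> W" unfolding Y_def W_def using x by auto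
    qed
  qed
  have cYW: "\<And>c. c \<in> D \<Longrightarrow> card (c \<inter> Y) + card (c \<inter> W) = 2"
  proof -
    fix c assume c: "c \<in> D"
    have "c = (c \<inter> Y) \<union> (c \<inter> W)" using cD[OF c] by auto
    moreover have fc: "finite c" using c2 c D_def by (metis DiffD1 card.infinite zero_neq_numeral)
    moreover have "(c \<inter> Y) \<inter> (c \<inter> W) = {}" using YW by auto
    ultimately have "card c = card (c \<inter> Y) + card (c \<inter> W)"
      by (metis card_Un_disjoint finite_Int)
    thus "card (c \<inter> Y) + card (c \<inter> W) = 2" using c2 c D_def by simp
  qed
  have cY2: "\<And>c. c \<in> D \<Longrightarrow> (c \<subseteq> Y) = (card (c \<inter> Y) = 2)"
  proof -
    fix c assume c: "c \<in> D"
    have fc: "finite c" using c2 c D_def by (metis DiffD1 card.infinite zero_neq_numeral)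
    show "(c \<subseteq> Y) = (card (c \<inter> Y) = 2)"
      using card_subset_eq[of c "c \<inter> Y"] fc c2 c D_def by (auto simp: Int_absorb2)
  qed
  have cW2: "\<And>c. c \<in> D \<Longrightarrow> (c \<subseteq> W) = (card (c \<inter> W) = 2)"
  proof -
    fix c assume c: "c \<in> D"
    have fc: "finite c" using c2 c D_def by (metis DiffD1 card.infinite zero_neq_numeral)
    show "(c \<subseteq> W) = (card (c \<inter> W) = 2)"
      using card_subset_eq[of c "c \<inter> W"] fc c2 c D_def by (auto simp: Int_absorb2)
  qed
  have pw: "\<And>c. c \<in> D \<Longrightarrow> card (c \<inter> Y) + (if c \<subseteq> W then 2 else 0)
        = card (c \<inter> W) + (if c \<subseteq> Y then 2 else 0)"
    using cYW cY2 cW2 by fastforce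
  have sumeq: "(\<Sum>c\<in>D. card (c \<inter> Y)) + 2 * card {c\<in>D. c \<subseteq> W}
       = (\<Sum>c\<in>D. card (c \<inter> W)) + 2 * card {c\<in>D. c \<subseteq> Y}"
  proof -
    have "(\<Sum>c\<in>D. card (c \<inter> Y) + (if c \<subseteq> W then 2 else 0))
        = (\<Sum>c\<in>D. card (c \<inter> W) + (if c \<subseteq> Y then 2 else 0))"
      using pw by (rule sum.cong[OF refl])
    thus ?thesis by (simp add: sum.distrib sum_ind2[OF finD])
  qed
  have UD: "\<And>X. X \<subseteq> {1..2*n+2} - a \<Longrightarrow> (\<Sum>c\<in>D. card (c \<inter> X)) = card X"
  proof -
    fix X assume X: "X \<subseteq> {1..2*n+2} - a"
    have "(\<Union>c\<in>D. c \<inter> X) = X"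
    proof
      show "(\<Union>c\<in>D. c \<inter> X) \<subseteq> X" by auto
      show "X \<subseteq> (\<Union>c\<in>D. c \<inter> X)"
      proof
        fix x assume x: "x \<in> X"
        then have "x \<in> \<Union>C" using X UC by auto
        then obtain c where "c \<in> C" "x \<in> c" by auto
        moreover have "c \<noteq> a" using x X \<open>x \<in> c\<close> by auto
        ultimately show "x \<in> (\<Union>c\<in>D. c \<inter> X)" using x D_def by auto
      qed
    qed
    moreover have "card (\<Union>c\<in>D. c \<inter> X) = (\<Sum>c\<in>D. card (c \<inter> X))"
      apply (rule card_UN_disjoint[OF finD])
      using X apply (meson finite_Int finite_atLeastAtMost finite_subset finite_Diff)
      using dis D_def by auto
    ultimately show "(\<Sum>c\<in>D. card (c \<inter> X)) = card X" by simp
  qed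
  have cardY: "card Y = (s - 1) + k"
  proof -
    have "card Y = card {1..<s} + card {e<..2*n+2}" unfolding Y_def
      by (rule card_Un_disjoint) (use as in auto)
    thus ?thesis using e d_def assms(4) by simp
  qed
  have cardW: "card W = e - s - 1" unfolding W_def by simp
  have sY: "(\<Sum>c\<in>D. card (c \<inter> Y)) = card Y"
    by (rule UD) (use as e d_def assms(4) in \<open>auto simp: Y_def\<close>)
  have sW: "(\<Sum>c\<in>D. card (c \<inter> W)) = card W"
    by (rule UD) (use as e d_def assms(4) in \<open>auto simp: W_def\<close>)
  have W2: "card {c\<in>D. c \<subseteq> W} \<le> 2*d - s"
  proof -
    have "start_pt ` {c\<in>D. c \<subseteq> W} \<subseteq> {s<..2*d}"
    proof
      fix x assume "x \<in> start_pt ` {c\<in>D. c \<subseteq> W}"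
      then obtain c where c: "c \<in> D" "c \<subseteq> W" "x = start_pt c" by auto
      have "c = {start_pt c, end_pt c} \<and> start_pt c + k + 1 \<le> end_pt c" using ch c D_def by auto
      thus "x \<in> {s<..2*d}" using c e W_def by auto
    qed
    moreover have "inj_on start_pt {c\<in>D. c \<subseteq> W}"
    proof
      fix c c' assume c: "c \<in> {c\<in>D. c \<subseteq> W}" "c' \<in> {c\<in>D. c \<subseteq> W}" "start_pt c = start_pt c'"
      have "start_pt c \<in> c" "start_pt c' \<in> c'" using ch c D_def by (metis DiffD1 insertI1 mem_Collect_eq)+
      thus "c = c'" using dis c D_def by auto
    qed
    ultimately have "card {c\<in>D. c \<subseteq> W} \<le> card {s<..2*d}"
      by (metis card_inj_on_le finite_greaterThanAtMost)
    thus ?thesis by simp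
  qed
  have Bsub: "{b \<in> {c \<in> C. start_pt c \<notin> {k + 2 .. 2 * n - k + 1} \<and> end_pt c \<notin> {k + 2 .. 2 * n - k + 1}}.
                 start_pt b < start_pt a} \<subseteq> {c\<in>D. c \<subseteq> Y}"
  proof
    fix b assume b: "b \<in> {b \<in> {c \<in> C. start_pt c \<notin> {k + 2 .. 2 * n - k + 1} \<and> end_pt c \<notin> {k + 2 .. 2 * n - k + 1}}.
                 start_pt b < start_pt a}"
    have bC: "b \<in> C" "start_pt b < s" "end_pt b \<notin> {k + 2 .. 2 * n - k + 1}" using b s_def by auto
    have bb: "b = {start_pt b, end_pt b} \<and> start_pt b + k + 1 \<le> end_pt b \<and> 1 \<le> start_pt b \<and> end_pt b \<le> 2*n+2"
      using ch bC by auto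
    have "b \<noteq> a" by (metis bC(2) less_irrefl s_def)
    hence ba: "b \<inter> a = {}" using dis bC assms(6) by blast
    have eb: "end_pt b \<in> b" using bb by (metis insertI1 insert_commute)
    have ea: "e \<in> a" using as by simp
    have "end_pt b \<noteq> e" using ba eb ea by blast
    moreover have "end_pt b \<ge> e"
    proof -
      have "end_pt b \<ge> k + 2" using bb by linarith
      moreover have "\<not> (k + 2 \<le> end_pt b \<and> end_pt b \<le> 2 * n - k + 1)" using bC(3) by simp
      ultimately show ?thesis using e d_def assms(4) by linarith
    qed
    ultimately have y1: "end_pt b \<in> Y" unfolding Y_def using bb by auto
    have y2: "start_pt b \<in> Y" unfolding Y_def using bb bC(2) by auto
    have "b \<subseteq> Y" using bb y1 y2 by (metis insert_subset empty_subsetI)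
    thus "b \<in> {c\<in>D. c \<subseteq> Y}" using \<open>b \<noteq> a\<close> bC D_def by auto
  qed
  have "card {c\<in>D. c \<subseteq> Y} \<le> d"
    using sumeq sY sW cardY cardW W2 s2d e as by linarith
  moreover have "card {b \<in> {c \<in> C. start_pt c \<notin> {k + 2 .. 2 * n - k + 1} \<and> end_pt c \<notin> {k + 2 .. 2 * n - k + 1}}.
                 start_pt b < start_pt a} \<le> card {c\<in>D. c \<subseteq> Y}"
    by (rule card_mono) (use finD Bsub in auto)
  ultimately show ?thesis using d_def by linarith
qed

end
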